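(* Let $(H,\mu_H,\Delta_H,\alpha_H)$ be a Hom-bialgebra, $(A,\mu_A,\alpha_A)$ a left $H$-module Hom-algebra with action $h\otimes a\mapsto h\cdot a$, and $(C,\mu_C,\alpha_C)$ a right $H$-module Hom-algebra with action $c\otimes h\mapsto c\cdot h$, with $\alpha_H,\alpha_A,\alpha_C$ bijective. Consider the Hom-twisting maps $R_1:H\otimes A\to A\otimes H$, $R_1(h\otimes a)=\alpha_H^{-2}(h_1)\cdot\alpha_A^{-1}(a)\otimes\alpha_H^{-1}(h_2)$, $R_2:C\otimes H\to H\otimes C$, $R_2(c\otimes h)=\alpha_H^{-1}(h_1)\otimes\alpha_C^{-1}(c)\cdot\alpha_H^{-2}(h_2)$, and $R_3:C\otimes A\to A\otimes C$, $R_3(c\otimes a)=a\otimes c$. Then $(\mathrm{id}_A\otimes R_2)\circ(R_3\otimes\mathrm{id}_H)\circ(\mathrm{id}_C\otimes R_1)=(R_1\otimes\mathrm{id}_C)\circ(\mathrm{id}_H\otimes R_3)\circ(R_2\otimes\mathrm{id}_A)$; consequently the iterated Hom-twisted tensor product $A\# H\# C:=A\otimes_{R_1}H\otimes_{R_2}C$ is a Hom-associative algebra on $A\otimes H\otimes C$ with structure map $\alpha_A\otimes\alpha_H\otimes\alpha_C$ and multiplication $(a\# h\# c)(a'\# h'\# c')=a(\alpha_H^{-2}(h_1)\cdot\alpha_A^{-1}(a'))\#\alpha_H^{-1}(h_2h'_1)\#(\alpha_C^{-1}(c)\cdot\alpha_H^{-2}(h'_2))c'$.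
   Context: Over a field $k$, no (co)units; $\Delta(h)=h_1\otimes h_2$. Hom-associative algebra $(A,\mu,\alpha)$: $\alpha(aa')=\alpha(a)\alpha(a')$, $\alpha(a)(a'a'')=(aa')\alpha(a'')$. Hom-bialgebra $(H,\mu,\Delta,\alpha)$: $(H,\mu,\alpha)$ Hom-associative, $\Delta(h_1)\otimes\alpha(h_2)=\alpha(h_1)\otimes\Delta(h_2)$, $\Delta(hh')=h_1h'_1\otimes h_2h'_2$, $\Delta(\alpha(h))=\alpha(h_1)\otimes\alpha(h_2)$. Left $H$-module Hom-algebra: Hom-associative $(A,\mu_A,\alpha_A)$ with action satisfying $\alpha_A(h\cdot a)=\alpha_H(h)\cdot\alpha_A(a)$, $\alpha_H(h)\cdot(h'\cdot a)=(hh')\cdot\alpha_A(a)$, $\alpha_H^2(h)\cdot(aa')=(h_1\cdot a)(h_2\cdot a')$. Right $H$-module Hom-algebra: Hom-associative $(C,\mu_C,\alpha_C)$ with action satisfying $\alpha_C(c\cdot h)=\alpha_C(c)\cdot\alpha_H(h)$, $(c\cdot h)\cdot\alpha_H(h')=\alpha_C(c)\cdot(hh')$, $(cc')\cdot\alpha_H^2(h)=(c\cdot h_1)(c'\cdot h_2)$. A Hom-twisting map between Hom-associative $A$ and $B$ is linear $R:B\otimes A\to A\otimes B$ with $(\alpha_A\otimes\alpha_B)\circ R=R\circ(\alpha_B\otimes\alpha_A)$, $R\circ(\alpha_B\otimes\mu_A)=(\mu_A\otimes\alpha_B)\circ(\mathrm{id}\otimes R)\circ(R\otimes\mathrm{id})$,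 $R\circ(\mu_B\otimes\alpha_A)=(\alpha_A\otimes\mu_B)\circ(R\otimes\mathrm{id})\circ(\mathrm{id}\otimes R)$ ($R_1,R_2,R_3$ above are such maps). Given Hom-twisting maps $R_1:B\otimes A\to A\otimes B$, $R_2:C\otimes B\to B\otimes C$, $R_3:C\otimes A\to A\otimes C$ satisfying the braid relation, the iterated Hom-twisted tensor product $A\otimes_{R_1}B\otimes_{R_2}C$ is $A\otimes B\otimes C$ with structure map $\alpha_A\otimes\alpha_B\otimes\alpha_C$ and product $(a\otimes b\otimes c)(a'\otimes b'\otimes c')=a(a'_{R_3})_{R_1}\otimes b_{R_1}b'_{R_2}\otimes(c_{R_3})_{R_2}c'$, where $R_i(y\otimes x)=x_{R_i}\otimes y_{R_i}$. *)

theory Defs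
  imports "HOL-Library.Poly_Mapping"
begin

(* 
A vector space over the field 'k is modelled as the free vector space
on a basis indexed by a type 'i, i.e. finitely supported functions 'i \<Rightarrow>\<^sub>0 'k
(every vector space has a basis, so this loses no generality).  The tensor product
of the spaces with bases 'i and 'j is the free space on 'i \<times> 'j, and
x \<otimes> y is given by the product of coordinates.
Threefold tensor products are bracketed explicitly and the associativity
isomorphisms asl / asr are written out.
 *)

definition vscale :: "'k::field \<Rightarrow> ('i \<Rightarrow>\<^sub>0 'k) \<Rightarrow> ('i \<Rightarrow>\<^sub>0 'k)" where
  "vscale c x = Poly_Mapping.map (\<lambda>v. c * v) x"

definition bvec :: "'i \<Rightarrow> ('i \<Rightarrow>\<^sub>0 'k::field)" where
  "bvec i = Poly_Mapping.single i 1"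

definition lin :: "(('i \<Rightarrow>\<^sub>0 'k::field) \<Rightarrow> ('j \<Rightarrow>\<^sub>0 'k)) \<Rightarrow> bool" where
  "lin f \<longleftrightarrow> (\<forall>x y. f (x + y) = f x + f y) \<and> (\<forall>c x. f (vscale c x) = vscale c (f x))"

definition tens :: "('i \<Rightarrow>\<^sub>0 'k::field) \<Rightarrow> ('j \<Rightarrow>\<^sub>0 'k) \<Rightarrow> (('i \<times> 'j) \<Rightarrow>\<^sub>0 'k)" where
  "tens x y = (\<Sum>i\<in>Poly_Mapping.keys x. \<Sum>j\<in>Poly_Mapping.keys y. Poly_Mapping.single (i, j) (Poly_Mapping.lookup x i * Poly_Mapping.lookup y j))"

(* The linear map on X \<otimes> Y induced by a (bilinear) map F, i.e.
  bilin_ext F (\<Sum> x_i \<otimes> y_i) = \<Sum> F x_i y_i; used also for Sweedler notation: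
  bilin_ext (\<lambda>h1 h2. G h1 h2) (\<Delta> h) = G(h_1, h_2). *)
definition bilin_ext :: "(('i \<Rightarrow>\<^sub>0 'k::field) \<Rightarrow> ('j \<Rightarrow>\<^sub>0 'k) \<Rightarrow> ('r \<Rightarrow>\<^sub>0 'k))
    \<Rightarrow> (('i \<times> 'j) \<Rightarrow>\<^sub>0 'k) \<Rightarrow> ('r \<Rightarrow>\<^sub>0 'k)" where
  "bilin_ext F z = (\<Sum>p\<in>Poly_Mapping.keys z. vscale (Poly_Mapping.lookup z p) (F (bvec (fst p)) (bvec (snd p))))"

definition tmap :: "(('i \<Rightarrow>\<^sub>0 'k::field) \<Rightarrow> ('i2 \<Rightarrow>\<^sub>0 'k)) \<Rightarrow> (('j \<Rightarrow>\<^sub>0 'k) \<Rightarrow> ('j2 \<Rightarrow>\<^sub>0 'k))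
    \<Rightarrow> (('i \<times> 'j) \<Rightarrow>\<^sub>0 'k) \<Rightarrow> (('i2 \<times> 'j2) \<Rightarrow>\<^sub>0 'k)" where
  "tmap f g = bilin_ext (\<lambda>x y. tens (f x) (g y))"

definition asl :: "(('a \<times> ('b \<times> 'c)) \<Rightarrow>\<^sub>0 'k::field) \<Rightarrow> ((('a \<times> 'b) \<times> 'c) \<Rightarrow>\<^sub>0 'k)" where
  "asl = bilin_ext (\<lambda>x yz. bilin_ext (\<lambda>y z. tens (tens x y) z) yz)"

definition asr :: "((('a \<times> 'b) \<times> 'c) \<Rightarrow>\<^sub>0 'k::field) \<Rightarrow> (('a \<times> ('b \<times> 'c)) \<Rightarrow>\<^sub>0 'k)" where
  "asr = bilin_ext (\<lambda>xy z. bilin_ext (\<lambda>x y. tens x (tens y z)) xy)"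

definition hom_assoc :: "((('a \<times> 'a) \<Rightarrow>\<^sub>0 'k::field) \<Rightarrow> ('a \<Rightarrow>\<^sub>0 'k)) \<Rightarrow> (('a \<Rightarrow>\<^sub>0 'k) \<Rightarrow> ('a \<Rightarrow>\<^sub>0 'k)) \<Rightarrow> bool" where
  "hom_assoc mu al \<longleftrightarrow> lin mu \<and> lin al \<and>
     (\<forall>x y. al (mu (tens x y)) = mu (tens (al x) (al y))) \<and>
     (\<forall>x y z. mu (tens (al x) (mu (tens y z))) = mu (tens (mu (tens x y)) (al z)))"

(* Hom-bialgebra (H, \<mu>, \<Delta>, \<alpha>) (no unit, no counit). *)
definition hom_bialgebra :: "((('h \<times> 'h) \<Rightarrow>\<^sub>0 'k::field) \<Rightarrow> ('h \<Rightarrow>\<^sub>0 'k)) \<Rightarrow> (('h \<Rightarrow>\<^sub>0 'k) \<Rightarrow> (('h \<times> 'h) \<Rightarrow>\<^sub>0 'k))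
    \<Rightarrow> (('h \<Rightarrow>\<^sub>0 'k) \<Rightarrow> ('h \<Rightarrow>\<^sub>0 'k)) \<Rightarrow> bool" where
  "hom_bialgebra mu Delta al \<longleftrightarrow> hom_assoc mu al \<and> lin Delta \<and>
     (\<forall>h. bilin_ext (\<lambda>h1 h2. tens (Delta h1) (al h2)) (Delta h)
          = asl (bilin_ext (\<lambda>h1 h2. tens (al h1) (Delta h2)) (Delta h))) \<and>
     (\<forall>h h'. Delta (mu (tens h h')) =
          bilin_ext (\<lambda>h1 h2. bilin_ext (\<lambda>h1' h2'. tens (mu (tens h1 h1')) (mu (tens h2 h2'))) (Delta h')) (Delta h)) \<and>
     (\<forall>h. Delta (al h) = bilin_ext (\<lambda>h1 h2. tens (al h1) (al h2)) (Delta h))"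

definition left_module_hom_algebra ::
  "((('h \<times> 'h) \<Rightarrow>\<^sub>0 'k::field) \<Rightarrow> ('h \<Rightarrow>\<^sub>0 'k)) \<Rightarrow> (('h \<Rightarrow>\<^sub>0 'k) \<Rightarrow> (('h \<times> 'h) \<Rightarrow>\<^sub>0 'k)) \<Rightarrow> (('h \<Rightarrow>\<^sub>0 'k) \<Rightarrow> ('h \<Rightarrow>\<^sub>0 'k))
   \<Rightarrow> ((('a \<times> 'a) \<Rightarrow>\<^sub>0 'k) \<Rightarrow> ('a \<Rightarrow>\<^sub>0 'k)) \<Rightarrow> (('a \<Rightarrow>\<^sub>0 'k) \<Rightarrow> ('a \<Rightarrow>\<^sub>0 'k))
   \<Rightarrow> ((('h \<times> 'a) \<Rightarrow>\<^sub>0 'k) \<Rightarrow> ('a \<Rightarrow>\<^sub>0 'k)) \<Rightarrow> bool" where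
  "left_module_hom_algebra muH DeltaH alH muA alA act \<longleftrightarrow> hom_assoc muA alA \<and> lin act \<and>
     (\<forall>h a. alA (act (tens h a)) = act (tens (alH h) (alA a))) \<and>
     (\<forall>h h' a. act (tens (alH h) (act (tens h' a))) = act (tens (muH (tens h h')) (alA a))) \<and>
     (\<forall>h a a'. act (tens (alH (alH h)) (muA (tens a a')))
          = bilin_ext (\<lambda>h1 h2. muA (tens (act (tens h1 a)) (act (tens h2 a')))) (DeltaH h))"

definition right_module_hom_algebra ::
  "((('h \<times> 'h) \<Rightarrow>\<^sub>0 'k::field) \<Rightarrow> ('h \<Rightarrow>\<^sub>0 'k)) \<Rightarrow> (('h \<Rightarrow>\<^sub>0 'k) \<Rightarrow> (('h \<times> 'h) \<Rightarrow>\<^sub>0 'k)) \<Rightarrow> (('h \<Rightarrow>\<^sub>0 'k) \<Rightarrow> ('h \<Rightarrow>\<^sub>0 'k))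
   \<Rightarrow> ((('c \<times> 'c) \<Rightarrow>\<^sub>0 'k) \<Rightarrow> ('c \<Rightarrow>\<^sub>0 'k)) \<Rightarrow> (('c \<Rightarrow>\<^sub>0 'k) \<Rightarrow> ('c \<Rightarrow>\<^sub>0 'k))
   \<Rightarrow> ((('c \<times> 'h) \<Rightarrow>\<^sub>0 'k) \<Rightarrow> ('c \<Rightarrow>\<^sub>0 'k)) \<Rightarrow> bool" where
  "right_module_hom_algebra muH DeltaH alH muC alC act \<longleftrightarrow> hom_assoc muC alC \<and> lin act \<and>
     (\<forall>c h. alC (act (tens c h)) = act (tens (alC c) (alH h))) \<and>
     (\<forall>c h h'. act (tens (act (tens c h)) (alH h')) = act (tens (alC c) (muH (tens h h')))) \<and>
     (\<forall>c c' h. act (tens (muC (tens c c')) (alH (alH h)))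
          = bilin_ext (\<lambda>h1 h2. muC (tens (act (tens c h1)) (act (tens c' h2)))) (DeltaH h))"

definition hom_twisting ::
  "((('a \<times> 'a) \<Rightarrow>\<^sub>0 'k::field) \<Rightarrow> ('a \<Rightarrow>\<^sub>0 'k)) \<Rightarrow> (('a \<Rightarrow>\<^sub>0 'k) \<Rightarrow> ('a \<Rightarrow>\<^sub>0 'k))
   \<Rightarrow> ((('b \<times> 'b) \<Rightarrow>\<^sub>0 'k) \<Rightarrow> ('b \<Rightarrow>\<^sub>0 'k)) \<Rightarrow> (('b \<Rightarrow>\<^sub>0 'k) \<Rightarrow> ('b \<Rightarrow>\<^sub>0 'k))
   \<Rightarrow> ((('b \<times> 'a) \<Rightarrow>\<^sub>0 'k) \<Rightarrow> (('a \<times> 'b) \<Rightarrow>\<^sub>0 'k)) \<Rightarrow> bool" where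
  "hom_twisting muA alA muB alB R \<longleftrightarrow> lin R \<and>
     (\<forall>z. tmap alA alB (R z) = R (tmap alB alA z)) \<and>
     (\<forall>z. R (tmap alB muA (asr z)) = tmap muA alB (asl (tmap id R (asr (tmap R id z))))) \<and>
     (\<forall>z. R (tmap muB alA (asl z)) = tmap alA muB (asr (tmap R id (asl (tmap id R z)))))"

(* Product of the iterated Hom-twisted tensor product A \<otimes>_{R1} B \<otimes>_{R2} C on
  A \<otimes> (B \<otimes> C): (a\<otimes>b\<otimes>c)(a'\<otimes>b'\<otimes>c') = a (a'_{R3})_{R1} \<otimes> b_{R1} b'_{R2} \<otimes> (c_{R3})_{R2} c'. *)
definition tri_ext :: "(('a \<Rightarrow>\<^sub>0 'k::field) \<Rightarrow> ('b \<Rightarrow>\<^sub>0 'k) \<Rightarrow> ('c \<Rightarrow>\<^sub>0 'k) \<Rightarrow> ('r \<Rightarrow>\<^sub>0 'k))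
    \<Rightarrow> (('a \<times> ('b \<times> 'c)) \<Rightarrow>\<^sub>0 'k) \<Rightarrow> ('r \<Rightarrow>\<^sub>0 'k)" where
  "tri_ext F = bilin_ext (\<lambda>a bc. bilin_ext (\<lambda>b c. F a b c) bc)"

definition iter_twisted_mult ::
  "((('a \<times> 'a) \<Rightarrow>\<^sub>0 'k::field) \<Rightarrow> ('a \<Rightarrow>\<^sub>0 'k)) \<Rightarrow> ((('b \<times> 'b) \<Rightarrow>\<^sub>0 'k) \<Rightarrow> ('b \<Rightarrow>\<^sub>0 'k)) \<Rightarrow> ((('c \<times> 'c) \<Rightarrow>\<^sub>0 'k) \<Rightarrow> ('c \<Rightarrow>\<^sub>0 'k))
   \<Rightarrow> ((('b \<times> 'a) \<Rightarrow>\<^sub>0 'k) \<Rightarrow> (('a \<times> 'b) \<Rightarrow>\<^sub>0 'k)) \<Rightarrow> ((('c \<times> 'b) \<Rightarrow>\<^sub>0 'k) \<Rightarrow> (('b \<times> 'c) \<Rightarrow>\<^sub>0 'k))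
   \<Rightarrow> ((('c \<times> 'a) \<Rightarrow>\<^sub>0 'k) \<Rightarrow> (('a \<times> 'c) \<Rightarrow>\<^sub>0 'k))
   \<Rightarrow> ((('a \<times> ('b \<times> 'c)) \<times> ('a \<times> ('b \<times> 'c))) \<Rightarrow>\<^sub>0 'k) \<Rightarrow> (('a \<times> ('b \<times> 'c)) \<Rightarrow>\<^sub>0 'k)" where
  "iter_twisted_mult muA muB muC R1 R2 R3 = bilin_ext (\<lambda>x y.
     tri_ext (\<lambda>a b c. tri_ext (\<lambda>a' b' c'.
       bilin_ext (\<lambda>a'3 c3.
         bilin_ext (\<lambda>a'31 b1.
           bilin_ext (\<lambda>b'2 c32. tens (muA (tens a a'31)) (tens (muB (tens b1 b'2)) (muC (tens c32 c'))))
             (R2 (tens c3 b')))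
           (R1 (tens b a'3)))
         (R3 (tens c a'))) y) x)"

definition smash_R1 :: "(('h \<Rightarrow>\<^sub>0 'k::field) \<Rightarrow> (('h \<times> 'h) \<Rightarrow>\<^sub>0 'k)) \<Rightarrow> (('h \<Rightarrow>\<^sub>0 'k) \<Rightarrow> ('h \<Rightarrow>\<^sub>0 'k))
   \<Rightarrow> (('a \<Rightarrow>\<^sub>0 'k) \<Rightarrow> ('a \<Rightarrow>\<^sub>0 'k)) \<Rightarrow> ((('h \<times> 'a) \<Rightarrow>\<^sub>0 'k) \<Rightarrow> ('a \<Rightarrow>\<^sub>0 'k))
   \<Rightarrow> (('h \<times> 'a) \<Rightarrow>\<^sub>0 'k) \<Rightarrow> (('a \<times> 'h) \<Rightarrow>\<^sub>0 'k)" where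
  "smash_R1 DeltaH alH alA act = bilin_ext (\<lambda>h a.
     bilin_ext (\<lambda>h1 h2. tens (act (tens (inv alH (inv alH h1)) (inv alA a))) (inv alH h2)) (DeltaH h))"

definition smash_R2 :: "(('h \<Rightarrow>\<^sub>0 'k::field) \<Rightarrow> (('h \<times> 'h) \<Rightarrow>\<^sub>0 'k)) \<Rightarrow> (('h \<Rightarrow>\<^sub>0 'k) \<Rightarrow> ('h \<Rightarrow>\<^sub>0 'k))
   \<Rightarrow> (('c \<Rightarrow>\<^sub>0 'k) \<Rightarrow> ('c \<Rightarrow>\<^sub>0 'k)) \<Rightarrow> ((('c \<times> 'h) \<Rightarrow>\<^sub>0 'k) \<Rightarrow> ('c \<Rightarrow>\<^sub>0 'k))
   \<Rightarrow> (('c \<times> 'h) \<Rightarrow>\<^sub>0 'k) \<Rightarrow> (('h \<times> 'c) \<Rightarrow>\<^sub>0 'k)" where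
  "smash_R2 DeltaH alH alC act = bilin_ext (\<lambda>c h.
     bilin_ext (\<lambda>h1 h2. tens (inv alH h1) (act (tens (inv alC c) (inv alH (inv alH h2))))) (DeltaH h))"

definition flip_R :: "(('c \<times> 'a) \<Rightarrow>\<^sub>0 'k::field) \<Rightarrow> (('a \<times> 'c) \<Rightarrow>\<^sub>0 'k)" where
  "flip_R = bilin_ext (\<lambda>c a. tens a c)"

definition two_sided_smash_mult ::
  "((('h \<times> 'h) \<Rightarrow>\<^sub>0 'k::field) \<Rightarrow> ('h \<Rightarrow>\<^sub>0 'k)) \<Rightarrow> (('h \<Rightarrow>\<^sub>0 'k) \<Rightarrow> (('h \<times> 'h) \<Rightarrow>\<^sub>0 'k)) \<Rightarrow> (('h \<Rightarrow>\<^sub>0 'k) \<Rightarrow> ('h \<Rightarrow>\<^sub>0 'k))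
   \<Rightarrow> ((('a \<times> 'a) \<Rightarrow>\<^sub>0 'k) \<Rightarrow> ('a \<Rightarrow>\<^sub>0 'k)) \<Rightarrow> (('a \<Rightarrow>\<^sub>0 'k) \<Rightarrow> ('a \<Rightarrow>\<^sub>0 'k)) \<Rightarrow> ((('h \<times> 'a) \<Rightarrow>\<^sub>0 'k) \<Rightarrow> ('a \<Rightarrow>\<^sub>0 'k))
   \<Rightarrow> ((('c \<times> 'c) \<Rightarrow>\<^sub>0 'k) \<Rightarrow> ('c \<Rightarrow>\<^sub>0 'k)) \<Rightarrow> (('c \<Rightarrow>\<^sub>0 'k) \<Rightarrow> ('c \<Rightarrow>\<^sub>0 'k)) \<Rightarrow> ((('c \<times> 'h) \<Rightarrow>\<^sub>0 'k) \<Rightarrow> ('c \<Rightarrow>\<^sub>0 'k))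
   \<Rightarrow> ((('a \<times> ('h \<times> 'c)) \<times> ('a \<times> ('h \<times> 'c))) \<Rightarrow>\<^sub>0 'k) \<Rightarrow> (('a \<times> ('h \<times> 'c)) \<Rightarrow>\<^sub>0 'k)" where
  "two_sided_smash_mult muH DeltaH alH muA alA actA muC alC actC = bilin_ext (\<lambda>x y.
     tri_ext (\<lambda>a h c. tri_ext (\<lambda>a' h' c'.
       bilin_ext (\<lambda>h1 h2. bilin_ext (\<lambda>h1' h2'.
         tens (muA (tens a (actA (tens (inv alH (inv alH h1)) (inv alA a')))))
          (tens (inv alH (muH (tens h2 h1')))
                (muC (tens (actC (tens (inv alC c) (inv alH (inv alH h2')))) c'))))
         (DeltaH h')) (DeltaH h)) y) x)"

end

theory Submission
  imports Defs
begin


lemma lookup_vscale[simp]: "Poly_Mapping.lookup (vscale c x) i = c * Poly_Mapping.lookup x i"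
  by (simp add: vscale_def Poly_Mapping.map.rep_eq when_def)

lemma vscale_add: "vscale c (x + y) = vscale c x + vscale c y"
  by (rule poly_mapping_eqI) (simp add: lookup_add algebra_simps)
lemma vscale_add2: "vscale (c + d) x = vscale c x + vscale d x"
  by (rule poly_mapping_eqI) (simp add: lookup_add algebra_simps)
lemma vscale_vscale[simp]: "vscale c (vscale d x) = vscale (c*d) x"
  by (rule poly_mapping_eqI) (simp add: algebra_simps)
lemma vscale_0[simp]: "vscale 0 x = 0" "vscale c 0 = 0"
  by (rule poly_mapping_eqI; simp)+
lemma vscale_1[simp]: "vscale 1 x = x"
  by (rule poly_mapping_eqI; simp)
lemma vscale_sum: "vscale c (sum f S) = (\<Sum>s\<in>S. vscale c (f s))"
  by (rule poly_mapping_eqI) (simp add: lookup_sum sum_distrib_left)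

lemma lookup_bvec: "Poly_Mapping.lookup (bvec i) j = (if i = j then 1 else 0)"
  by (simp add: bvec_def lookup_single)

lemma expand_vec: "x = (\<Sum>i\<in>Poly_Mapping.keys x. vscale (Poly_Mapping.lookup x i) (bvec i))"
proof (rule poly_mapping_eqI)
  fix k
  have "(\<Sum>i\<in>Poly_Mapping.keys x. Poly_Mapping.lookup x i * (if i = k then 1 else 0)) = (\<Sum>i\<in>Poly_Mapping.keys x. if i = k then Poly_Mapping.lookup x i else 0)"
    by (rule sum.cong) auto
  also have "\<dots> = Poly_Mapping.lookup x k" by (simp add: sum.delta in_keys_iff)
  finally show "Poly_Mapping.lookup x k = Poly_Mapping.lookup (\<Sum>i\<in>Poly_Mapping.keys x. vscale (Poly_Mapping.lookup x i) (bvec i)) k"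
    by (simp add: lookup_sum lookup_bvec)
qed

lemma lin_add: "lin f \<Longrightarrow> f (x + y) = f x + f y" by (simp add: lin_def)
lemma lin_vscale: "lin f \<Longrightarrow> f (vscale c x) = vscale c (f x)" by (simp add: lin_def)
lemma lin_zero: "lin f \<Longrightarrow> f 0 = 0"
  using lin_vscale[of f 0 0] by simp
lemma lin_sum: "lin f \<Longrightarrow> f (sum g S) = (\<Sum>s\<in>S. f (g s))"
  by (induction S rule: infinite_finite_induct) (auto simp: lin_zero lin_add)
lemma lin_expand: "lin f \<Longrightarrow> f x = (\<Sum>i\<in>Poly_Mapping.keys x. vscale (Poly_Mapping.lookup x i) (f (bvec i)))"
proof -
  assume l: "lin f"
  have "f x = f (\<Sum>i\<in>Poly_Mapping.keys x. vscale (Poly_Mapping.lookup x i) (bvec i))"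
    using expand_vec[of x] by (rule arg_cong)
  then show ?thesis using l by (simp add: lin_sum lin_vscale)
qed

lemma lin_ext: "lin f \<Longrightarrow> lin g \<Longrightarrow> (\<And>i. f (bvec i) = g (bvec i)) \<Longrightarrow> f = g"
proof (rule ext)
  fix x assume a: "lin f" "lin g" "\<And>i. f (bvec i) = g (bvec i)"
  show "f x = g x" using lin_expand[OF a(1), of x] lin_expand[OF a(2), of x] a(3) by simp
qed

lemma lookup_tens: "Poly_Mapping.lookup (tens x y) (i, j) = Poly_Mapping.lookup x i * Poly_Mapping.lookup y j"
proof -
  have "Poly_Mapping.lookup (tens x y) (i, j) = (\<Sum>i'\<in>Poly_Mapping.keys x. \<Sum>j'\<in>Poly_Mapping.keys y. (if (i',j') = (i,j) then Poly_Mapping.lookup x i' * Poly_Mapping.lookup y j' else 0))"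
    by (simp add: tens_def lookup_sum lookup_single when_def)
  also have "\<dots> = Poly_Mapping.lookup x i * Poly_Mapping.lookup y j"
  proof -
    have "(\<Sum>i'\<in>Poly_Mapping.keys x. \<Sum>j'\<in>Poly_Mapping.keys y. (if (i',j') = (i,j) then Poly_Mapping.lookup x i' * Poly_Mapping.lookup y j' else 0))
       = (\<Sum>i'\<in>Poly_Mapping.keys x. if i' = i then (\<Sum>j'\<in>Poly_Mapping.keys y. if j' = j then Poly_Mapping.lookup x i * Poly_Mapping.lookup y j else 0) else 0)"
      by (rule sum.cong) auto
    then show ?thesis by (simp add: sum.delta in_keys_iff)
  qed
  finally show ?thesis .
qed

lemma lookup_tens': "Poly_Mapping.lookup (tens x y) p = Poly_Mapping.lookup x (fst p) * Poly_Mapping.lookup y (snd p)"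
  using lookup_tens[of x y "fst p" "snd p"] by simp

lemma tens_add1: "tens (x + x') y = tens x y + tens x' y"
  by (rule poly_mapping_eqI) (simp add: lookup_tens' lookup_add algebra_simps)
lemma tens_add2: "tens x (y + y') = tens x y + tens x y'"
  by (rule poly_mapping_eqI) (simp add: lookup_tens' lookup_add algebra_simps)
lemma tens_vscale1: "tens (vscale c x) y = vscale c (tens x y)"
  by (rule poly_mapping_eqI) (simp add: lookup_tens' algebra_simps)
lemma tens_vscale2: "tens x (vscale c y) = vscale c (tens x y)"
  by (rule poly_mapping_eqI) (simp add: lookup_tens' algebra_simps)
lemma tens_bvec[simp]: "tens (bvec i) (bvec j) = bvec (i, j)"
  by (rule poly_mapping_eqI) (auto simp: lookup_tens' lookup_bvec)

lemma lin_tens1: "lin (\<lambda>x. tens x y)" by (simp add: lin_def tens_add1 tens_vscale1)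
lemma lin_tens2: "lin (\<lambda>y. tens x y)" by (simp add: lin_def tens_add2 tens_vscale2)

lemma bilin_ext_superset:
  assumes "finite S" "Poly_Mapping.keys z \<subseteq> S"
  shows "bilin_ext F z = (\<Sum>p\<in>S. vscale (Poly_Mapping.lookup z p) (F (bvec (fst p)) (bvec (snd p))))"
  unfolding bilin_ext_def
  by (rule sum.mono_neutral_left) (use assms in \<open>auto simp: in_keys_iff\<close>)

lemma lin_bilin_ext: "lin (bilin_ext F)"
proof -
  have add: "bilin_ext F (x + y) = bilin_ext F x + bilin_ext F y" for x y
  proof -
    let ?S = "Poly_Mapping.keys x \<union> Poly_Mapping.keys y"
    have "Poly_Mapping.keys (x+y) \<subseteq> ?S" by (rule keys_add)
    then show ?thesis
      by (simp add: bilin_ext_superset[of ?S] lookup_add vscale_add2 sum.distrib)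
  qed
  have "bilin_ext F (vscale c x) = vscale c (bilin_ext F x)" for c x
  proof -
    have "Poly_Mapping.keys (vscale c x) \<subseteq> Poly_Mapping.keys x" by (auto simp: in_keys_iff)
    then show ?thesis
      by (simp add: bilin_ext_superset[of "Poly_Mapping.keys x"] vscale_sum)
  qed
  with add show ?thesis by (simp add: lin_def)
qed

lemma bilin_ext_bvec[simp]: "bilin_ext F (bvec (i, j)) = F (bvec i) (bvec j)"
  by (simp add: bilin_ext_def bvec_def)

lemma bilin_ext_tens_bvec[simp]: "bilin_ext F (tens (bvec i) (bvec j)) = F (bvec i) (bvec j)"
  by simp

lemma bilin_ext_add: "bilin_ext F (x + y) = bilin_ext F x + bilin_ext F y"
  using lin_bilin_ext lin_add by blast

lemma lin_pull: assumes l: "lin L" shows "L (bilin_ext F z) = bilin_ext (\<lambda>x y. L (F x y)) z"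
  unfolding bilin_ext_def by (simp only: lin_sum[OF l] lin_vscale[OF l])

lemma bilin_ext_cong: "(\<And>i j. F (bvec i) (bvec j) = G (bvec i) (bvec j)) \<Longrightarrow> bilin_ext F z = bilin_ext G z"
  by (simp add: bilin_ext_def)

lemma bilin_ext_swap:
  "bilin_ext (\<lambda>x y. bilin_ext (\<lambda>u v. F x y u v) w) z = bilin_ext (\<lambda>u v. bilin_ext (\<lambda>x y. F x y u v) z) w"
proof -
  have "bilin_ext (\<lambda>x y. bilin_ext (\<lambda>u v. F x y u v) w) z =
     (\<Sum>p\<in>Poly_Mapping.keys z. \<Sum>q\<in>Poly_Mapping.keys w. vscale (Poly_Mapping.lookup z p * Poly_Mapping.lookup w q) (F (bvec (fst p)) (bvec (snd p)) (bvec (fst q)) (bvec (snd q))))"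
    unfolding bilin_ext_def by (simp only: vscale_sum vscale_vscale)
  also have "\<dots> = (\<Sum>q\<in>Poly_Mapping.keys w. \<Sum>p\<in>Poly_Mapping.keys z. vscale (Poly_Mapping.lookup w q * Poly_Mapping.lookup z p) (F (bvec (fst p)) (bvec (snd p)) (bvec (fst q)) (bvec (snd q))))"
    by (subst sum.swap) (simp only: mult.commute)
  also have "\<dots> = bilin_ext (\<lambda>u v. bilin_ext (\<lambda>x y. F x y u v) z) w"
    unfolding bilin_ext_def by (simp only: vscale_sum vscale_vscale)
  finally show ?thesis .
qed

definition lin2 :: "(('i \<Rightarrow>\<^sub>0 'k::field) \<Rightarrow> ('j \<Rightarrow>\<^sub>0 'k) \<Rightarrow> ('r \<Rightarrow>\<^sub>0 'k)) \<Rightarrow> bool" where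
  "lin2 F \<longleftrightarrow> (\<forall>y. lin (\<lambda>x. F x y)) \<and> (\<forall>x. lin (F x))"

lemma lin2I: "(\<And>y. lin (\<lambda>x. F x y)) \<Longrightarrow> (\<And>x. lin (F x)) \<Longrightarrow> lin2 F"
  by (simp add: lin2_def)

lemma lin_tens1': "lin (\<lambda>x. bilin_ext F (tens x y))"
  using lin_bilin_ext[of F] unfolding lin_def by (simp add: tens_add1 tens_vscale1)
lemma lin_tens2': "lin (\<lambda>y. bilin_ext F (tens x y))"
  using lin_bilin_ext[of F] unfolding lin_def by (simp add: tens_add2 tens_vscale2)

lemma bilin_ext_tens: assumes "lin2 F" shows "bilin_ext F (tens x y) = F x y"
proof -
  have l1: "lin (\<lambda>x. F x y)" for y using assms by (simp add: lin2_def)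
  have l2: "lin (F x)" for x using assms by (simp add: lin2_def)
  have b: "(\<lambda>y. bilin_ext F (tens (bvec i) y)) = F (bvec i)" for i
    by (rule lin_ext[OF lin_tens2' l2]) simp
  have "(\<lambda>x. bilin_ext F (tens x y)) = (\<lambda>x. F x y)"
    by (rule lin_ext[OF lin_tens1' l1]) (metis b)
  then show ?thesis by metis
qed


lemma lin_comp: "lin f \<Longrightarrow> lin g \<Longrightarrow> lin (\<lambda>x. f (g x))"
  by (simp add: lin_def)

lemma lin_comp_simp: "lin f \<Longrightarrow> lin g \<Longrightarrow> lin (\<lambda>x. f (g x)) = True"
  by (simp add: lin_comp)

lemma lin_id_simp[simp]: "lin (\<lambda>x. x) = True"
  by (simp add: lin_def)

lemma lin_tensL_simp: "lin g \<Longrightarrow> lin (\<lambda>x. tens (g x) y) = True"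
  using lin_comp[OF lin_tens1 , of g] by simp
lemma lin_tensR_simp: "lin g \<Longrightarrow> lin (\<lambda>x. tens y (g x)) = True"
  using lin_comp[OF lin_tens2 , of g] by simp
lemma lin_bext_arg_simp: "lin g \<Longrightarrow> lin (\<lambda>x. bilin_ext F (g x)) = True"
  using lin_comp[OF lin_bilin_ext , of g] by simp

lemma lin_bext_param:
  assumes "\<And>i j. lin (\<lambda>x. G x (bvec i) (bvec j))"
  shows "lin (\<lambda>x. bilin_ext (G x) z)"
proof -
  have a: "G (x + y) (bvec i) (bvec j) = G x (bvec i) (bvec j) + G y (bvec i) (bvec j)" for x y i j
    using assms[of i j] by (simp add: lin_def)
  have b: "G (vscale c x) (bvec i) (bvec j) = vscale c (G x (bvec i) (bvec j))" for c x i j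
    using assms[of i j] by (simp add: lin_def)
  show ?thesis
    unfolding lin_def bilin_ext_def
    by (simp add: a b vscale_add sum.distrib vscale_sum mult.commute)
qed

lemma lin_bext_param_simp:
  "(\<And>i j. lin (\<lambda>x. G x (bvec i) (bvec j))) \<Longrightarrow> lin (\<lambda>x. bilin_ext (G x) z) = True"
  using lin_bext_param by blast

lemmas lin_simps = lin_tensL_simp lin_tensR_simp lin_bext_arg_simp lin_bext_param_simp lin2_def

lemma bext_bext: "bilin_ext F (bilin_ext G z) = bilin_ext (\<lambda>x y. bilin_ext F (G x y)) z"
  by (rule lin_pull[OF lin_bilin_ext])
lemma tens_bextL: "tens (bilin_ext G z) = (\<lambda>y. bilin_ext (\<lambda>u v. tens (G u v) y) z)"
  by (rule ext, rule lin_pull[OF lin_tens1])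
lemma tens_bextR: "tens x (bilin_ext G z) = bilin_ext (\<lambda>u v. tens x (G u v)) z"
  by (rule lin_pull[OF lin_tens2])

lemmas pull_simps = bext_bext tens_bextL tens_bextR

lemma inv_lin: assumes "lin f" "bij f" shows "lin (inv f)"
proof -
  have fi: "f (inv f x) = x" for x using assms(2) by (simp add: bij_is_surj surj_f_inv_f)
  have if': "inv f (f x) = x" for x using assms(2) by (simp add: bij_is_inj)
  show ?thesis unfolding lin_def
    by (metis fi if' lin_add[OF assms(1)] lin_vscale[OF assms(1)])
qed

definition lin3 :: "(('i \<Rightarrow>\<^sub>0 'k::field) \<Rightarrow> ('j \<Rightarrow>\<^sub>0 'k) \<Rightarrow> ('l \<Rightarrow>\<^sub>0 'k) \<Rightarrow> ('r \<Rightarrow>\<^sub>0 'k)) \<Rightarrow> bool" where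
  "lin3 F \<longleftrightarrow> (\<forall>y z. lin (\<lambda>x. F x y z)) \<and> (\<forall>x z. lin (\<lambda>y. F x y z)) \<and> (\<forall>x y. lin (F x y))"


lemma lin_ext2: "lin f \<Longrightarrow> lin g \<Longrightarrow> (\<And>i j. f (tens (bvec i) (bvec j)) = g (tens (bvec i) (bvec j))) \<Longrightarrow> f = g"
  by (rule lin_ext) (auto simp del: tens_bvec simp: tens_bvec[symmetric])
lemma lin_ext3l: "lin f \<Longrightarrow> lin g \<Longrightarrow> (\<And>i j k. f (tens (tens (bvec i) (bvec j)) (bvec k)) = g (tens (tens (bvec i) (bvec j)) (bvec k))) \<Longrightarrow> f = g"
  by (rule lin_ext) (auto simp del: tens_bvec simp: tens_bvec[symmetric])
lemma lin_ext3r: "lin f \<Longrightarrow> lin g \<Longrightarrow> (\<And>i j k. f (tens (bvec i) (tens (bvec j) (bvec k))) = g (tens (bvec i) (tens (bvec j) (bvec k)))) \<Longrightarrow> f = g"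
  by (rule lin_ext) (auto simp del: tens_bvec simp: tens_bvec[symmetric])

lemma lin_tmap: "lin (tmap f g)" by (simp add: tmap_def lin_bilin_ext)
lemma lin_asl: "lin asl" by (simp add: asl_def lin_bilin_ext)
lemma lin_asr: "lin asr" by (simp add: asr_def lin_bilin_ext)




declare tens_bvec[simp del]

lemma lin_ext_tri: "lin f \<Longrightarrow> lin g \<Longrightarrow> (\<And>a b c. f (bvec (a,b,c)) = g (bvec (a,b,c))) \<Longrightarrow> f = g"
  by (rule lin_ext) auto

lemma multi2: "(\<And>y. lin (\<lambda>x. f x y)) \<Longrightarrow> (\<And>y. lin (\<lambda>x. g x y)) \<Longrightarrow> (\<And>x. lin (f x)) \<Longrightarrow> (\<And>x. lin (g x))
  \<Longrightarrow> (\<And>i j. f (bvec i) (bvec j) = g (bvec i) (bvec j)) \<Longrightarrow> f x y = g x y"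
proof -
  assume a: "\<And>y. lin (\<lambda>x. f x y)" "\<And>y. lin (\<lambda>x. g x y)" "\<And>x. lin (f x)" "\<And>x. lin (g x)"
     "\<And>i j. f (bvec i) (bvec j) = g (bvec i) (bvec j)"
  have "f (bvec i) = g (bvec i)" for i by (rule lin_ext[OF a(3) a(4)]) (rule a(5))
  then have "(\<lambda>x. f x y) = (\<lambda>x. g x y)" by (intro lin_ext[OF a(1) a(2)]) simp
  then show ?thesis by metis
qed

lemma multi3: "(\<And>y z. lin (\<lambda>x. f x y z)) \<Longrightarrow> (\<And>y z. lin (\<lambda>x. g x y z)) 
  \<Longrightarrow> (\<And>x z. lin (\<lambda>y. f x y z)) \<Longrightarrow> (\<And>x z. lin (\<lambda>y. g x y z))
  \<Longrightarrow> (\<And>x y. lin (f x y)) \<Longrightarrow> (\<And>x y. lin (g x y))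
  \<Longrightarrow> (\<And>i j k. f (bvec i) (bvec j) (bvec k) = g (bvec i) (bvec j) (bvec k)) \<Longrightarrow> f x y z = g x y z"
proof -
  assume a: "\<And>y z. lin (\<lambda>x. f x y z)" "\<And>y z. lin (\<lambda>x. g x y z)" 
   "\<And>x z. lin (\<lambda>y. f x y z)" "\<And>x z. lin (\<lambda>y. g x y z)"
   "\<And>x y. lin (f x y)" "\<And>x y. lin (g x y)"
   "\<And>i j k. f (bvec i) (bvec j) (bvec k) = g (bvec i) (bvec j) (bvec k)"
  have 1: "f (bvec i) (bvec j) = g (bvec i) (bvec j)" for i j by (rule lin_ext[OF a(5) a(6)]) (rule a(7))
  have 2: "(\<lambda>y. f (bvec i) y z) = (\<lambda>y. g (bvec i) y z)" for i z by (intro lin_ext[OF a(3) a(4)]) (simp add: 1)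
  have "(\<lambda>x. f x y z) = (\<lambda>x. g x y z)" by (intro lin_ext[OF a(1) a(2)]) (metis 2)
  then show ?thesis by metis
qed

locale twist3 =
  fixes muA :: "(('a \<times> 'a) \<Rightarrow>\<^sub>0 'k::field) \<Rightarrow> ('a \<Rightarrow>\<^sub>0 'k)" and alA
    and muB :: "(('b \<times> 'b) \<Rightarrow>\<^sub>0 'k) \<Rightarrow> ('b \<Rightarrow>\<^sub>0 'k)" and alB
    and muC :: "(('c \<times> 'c) \<Rightarrow>\<^sub>0 'k) \<Rightarrow> ('c \<Rightarrow>\<^sub>0 'k)" and alC
    and R1 :: "(('b \<times> 'a) \<Rightarrow>\<^sub>0 'k) \<Rightarrow> (('a \<times> 'b) \<Rightarrow>\<^sub>0 'k)"
    and R2 :: "(('c \<times> 'b) \<Rightarrow>\<^sub>0 'k) \<Rightarrow> (('b \<times> 'c) \<Rightarrow>\<^sub>0 'k)"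
  assumes hA: "hom_assoc muA alA" and hB: "hom_assoc muB alB" and hC: "hom_assoc muC alC"
    and t1: "hom_twisting muA alA muB alB R1" and t2: "hom_twisting muB alB muC alC R2"
    and braid: "\<And>t :: (('c \<times> ('b \<times> 'a)) \<Rightarrow>\<^sub>0 'k).
          tmap id R2 (asr (tmap flip_R id (asl (tmap id R1 t))))
        = asr (tmap R1 id (asl (tmap id flip_R (asr (tmap R2 id (asl t))))))"
begin

lemma lins: "lin muA" "lin alA" "lin muB" "lin alB" "lin muC" "lin alC" "lin R1" "lin R2"
  using hA hB hC t1 t2 by (auto simp: hom_assoc_def hom_twisting_def)

lemmas linc = lin_comp_simp[OF lins(1)] lin_comp_simp[OF lins(2)] lin_comp_simp[OF lins(3)]
  lin_comp_simp[OF lins(4)] lin_comp_simp[OF lins(5)] lin_comp_simp[OF lins(6)]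
  lin_comp_simp[OF lins(7)] lin_comp_simp[OF lins(8)]
lemmas pullc = lin_pull[OF lins(1)] lin_pull[OF lins(2)] lin_pull[OF lins(3)]
  lin_pull[OF lins(4)] lin_pull[OF lins(5)] lin_pull[OF lins(6)]
  lin_pull[OF lins(7)] lin_pull[OF lins(8)]

lemmas NS = lin_simps linc pull_simps pullc bilin_ext_tens tmap_def asl_def asr_def

lemma assocA: "muA (tens (alA x) (muA (tens y z))) = muA (tens (muA (tens x y)) (alA z))"
   and multA: "alA (muA (tens x y)) = muA (tens (alA x) (alA y))" using hA by (auto simp: hom_assoc_def)
lemma assocB: "muB (tens (alB x) (muB (tens y z))) = muB (tens (muB (tens x y)) (alB z))"
   and multB: "alB (muB (tens x y)) = muB (tens (alB x) (alB y))" using hB by (auto simp: hom_assoc_def)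
lemma assocC: "muC (tens (alC x) (muC (tens y z))) = muC (tens (muC (tens x y)) (alC z))"
   and multC: "alC (muC (tens x y)) = muC (tens (alC x) (alC y))" using hC by (auto simp: hom_assoc_def)

lemma R1_T1: "R1 (tens (alB x) (alA y)) = bilin_ext (\<lambda>s t. tens (alA s) (alB t)) (R1 (tens x y))"
proof -
  have "tmap alA alB (R1 (tens x y)) = R1 (tmap alB alA (tens x y))" using t1 by (simp add: hom_twisting_def)
  then show ?thesis by (simp add: NS)
qed
lemma R2_T1: "R2 (tens (alC x) (alB y)) = bilin_ext (\<lambda>s t. tens (alB s) (alC t)) (R2 (tens x y))"
proof -
  have "tmap alB alC (R2 (tens x y)) = R2 (tmap alC alB (tens x y))" using t2 by (simp add: hom_twisting_def)
  then show ?thesis by (simp add: NS)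
qed
lemma R1_T2: "R1 (tens (alB b) (muA (tens a a'))) = bilin_ext (\<lambda>s t. bilin_ext (\<lambda>s2 t2. tens (muA (tens s s2)) (alB t2)) (R1 (tens t a'))) (R1 (tens b a))"
proof -
  have "R1 (tmap alB muA (asr (tens (tens b a) a'))) = tmap muA alB (asl (tmap id R1 (asr (tmap R1 id (tens (tens b a) a')))))"
    using t1 by (simp add: hom_twisting_def)
  then show ?thesis by (simp add: NS)
qed
lemma R2_T2: "R2 (tens (alC b) (muB (tens a a'))) = bilin_ext (\<lambda>s t. bilin_ext (\<lambda>s2 t2. tens (muB (tens s s2)) (alC t2)) (R2 (tens t a'))) (R2 (tens b a))"
proof -
  have "R2 (tmap alC muB (asr (tens (tens b a) a'))) = tmap muB alC (asl (tmap id R2 (asr (tmap R2 id (tens (tens b a) a')))))"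
    using t2 by (simp add: hom_twisting_def)
  then show ?thesis by (simp add: NS)
qed
lemma R1_T3: "R1 (tens (muB (tens b b')) (alA a)) = bilin_ext (\<lambda>u v. bilin_ext (\<lambda>s t. tens (alA s) (muB (tens t v))) (R1 (tens b u))) (R1 (tens b' a))"
proof -
  have "R1 (tmap muB alA (asl (tens b (tens b' a)))) = tmap alA muB (asr (tmap R1 id (asl (tmap id R1 (tens b (tens b' a))))))"
    using t1 by (simp add: hom_twisting_def)
  then show ?thesis by (simp add: NS)
qed
lemma R2_T3: "R2 (tens (muC (tens b b')) (alB a)) = bilin_ext (\<lambda>u v. bilin_ext (\<lambda>s t. tens (alB s) (muC (tens t v))) (R2 (tens b u))) (R2 (tens b' a))"
proof -
  have "R2 (tmap muC alB (asl (tens b (tens b' a)))) = tmap alB muC (asr (tmap R2 id (asl (tmap id R2 (tens b (tens b' a))))))"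
    using t2 by (simp add: hom_twisting_def)
  then show ?thesis by (simp add: NS)
qed

lemma flip_tens: "flip_R (tens c a) = tens a c"
  unfolding flip_R_def by (simp add: NS)

lemma braid_pt: assumes "lin3 G"
  shows "bilin_ext (\<lambda>s t. bilin_ext (\<lambda>p q. G s p q) (R2 (tens c t))) (R1 (tens b a))
       = bilin_ext (\<lambda>p q. bilin_ext (\<lambda>x y. G x y q) (R1 (tens p a))) (R2 (tens c b))"
proof -
  have g1: "lin (\<lambda>x. G x y z)" and g2: "lin (\<lambda>y. G x y z)" and g3: "lin (G x y)" for x y z
    using assms by (auto simp: lin3_def)
  define T where "T = tri_ext G"
  have "T (tmap id R2 (asr (tmap flip_R id (asl (tmap id R1 (tens c (tens b a)))))))
        = T (asr (tmap R1 id (asl (tmap id flip_R (asr (tmap R2 id (asl (tens c (tens b a)))))))))"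
    by (simp only: braid)
  then show ?thesis
    unfolding T_def tri_ext_def by (simp add: NS g1 g2 g3 flip_R_def)
qed


abbreviation "M \<equiv> iter_twisted_mult muA muB muC R1 R2 flip_R"
abbreviation "al3 \<equiv> tmap alA (tmap alB alC)"

lemma assoc_basis: "M (tens (al3 (bvec (a,b,c))) (M (tens (bvec (a',b',c')) (bvec (a'',b'',c''))))) = 
   M (tens (M (tens (bvec (a,b,c)) (bvec (a',b',c')))) (al3 (bvec (a'',b'',c''))))"
proof -
  define F where "F = (\<lambda>s1 s2 t2 y1 p2 q2 v. tens (muA (tens (muA (tens (bvec a) s1)) (alA s2))) (tens (muB (tens (muB (tens t2 y1)) (alB p2))) (muC (tens (muC (tens q2 v)) (alC (bvec c''))))))"
  define G where "G = (\<lambda>s1 t1 s' p1 q1. bilin_ext (\<lambda>u' v'. bilin_ext (\<lambda>s2 t2. bilin_ext (\<lambda>p2 q2. F s1 s2 t2 p1 p2 q2 v') (R2 (tens q1 u'))) (R1 (tens t1 s'))) (R2 (tens (bvec c') (bvec b''))))"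
  have eqL: "M (tens (al3 (bvec (a,b,c))) (M (tens (bvec (a',b',c')) (bvec (a'',b'',c''))))) =
    bilin_ext (\<lambda>s' t'. bilin_ext (\<lambda>u' v'. bilin_ext (\<lambda>s1 t1. bilin_ext (\<lambda>s2 t2. bilin_ext (\<lambda>p1 q1. bilin_ext (\<lambda>p2 q2. F s1 s2 t2 p1 p2 q2 v') (R2 (tens q1 u'))) (R2 (tens (bvec c) t'))) (R1 (tens t1 s'))) (R1 (tens (bvec b) (bvec a')))) (R2 (tens (bvec c') (bvec b'')))) (R1 (tens (bvec b') (bvec a'')))"
    by (simp add: NS iter_twisted_mult_def tri_ext_def flip_R_def R1_T2 R2_T2 R1_T3 R2_T3 assocA assocB assocC F_def)
  have eqR: "M (tens (M (tens (bvec (a,b,c)) (bvec (a',b',c')))) (al3 (bvec (a'',b'',c'')))) =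
    bilin_ext (\<lambda>s1 t1. bilin_ext (\<lambda>p q. bilin_ext (\<lambda>x1 y1. bilin_ext (\<lambda>x2 y2. bilin_ext (\<lambda>z1 w1. bilin_ext (\<lambda>z2 w2. F s1 x2 y2 y1 z2 w2 w1) (R2 (tens q z1))) (R2 (tens (bvec c') (bvec b'')))) (R1 (tens t1 x1))) (R1 (tens p (bvec a'')))) (R2 (tens (bvec c) (bvec b')))) (R1 (tens (bvec b) (bvec a')))"
    by (simp add: NS iter_twisted_mult_def tri_ext_def flip_R_def R1_T2 R2_T2 R1_T3 R2_T3 assocA assocB assocC F_def)
  have "bilin_ext (\<lambda>s' t'. bilin_ext (\<lambda>u' v'. bilin_ext (\<lambda>s1 t1. bilin_ext (\<lambda>s2 t2. bilin_ext (\<lambda>p1 q1. bilin_ext (\<lambda>p2 q2. F s1 s2 t2 p1 p2 q2 v') (R2 (tens q1 u'))) (R2 (tens (bvec c) t'))) (R1 (tens t1 s'))) (R1 (tens (bvec b) (bvec a')))) (R2 (tens (bvec c') (bvec b'')))) (R1 (tens (bvec b') (bvec a'')))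
     = bilin_ext (\<lambda>s' t'. bilin_ext (\<lambda>s1 t1. bilin_ext (\<lambda>u' v'. bilin_ext (\<lambda>s2 t2. bilin_ext (\<lambda>p1 q1. bilin_ext (\<lambda>p2 q2. F s1 s2 t2 p1 p2 q2 v') (R2 (tens q1 u'))) (R2 (tens (bvec c) t'))) (R1 (tens t1 s'))) (R2 (tens (bvec c') (bvec b'')))) (R1 (tens (bvec b) (bvec a')))) (R1 (tens (bvec b') (bvec a'')))"
    by (rule bilin_ext_cong, rule bilin_ext_swap)
  also have "\<dots> = bilin_ext (\<lambda>s1 t1. bilin_ext (\<lambda>s' t'. bilin_ext (\<lambda>u' v'. bilin_ext (\<lambda>s2 t2. bilin_ext (\<lambda>p1 q1. bilin_ext (\<lambda>p2 q2. F s1 s2 t2 p1 p2 q2 v') (R2 (tens q1 u'))) (R2 (tens (bvec c) t'))) (R1 (tens t1 s'))) (R2 (tens (bvec c') (bvec b'')))) (R1 (tens (bvec b') (bvec a'')))) (R1 (tens (bvec b) (bvec a')))"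
    by (rule bilin_ext_swap)
  also have "\<dots> = bilin_ext (\<lambda>s1 t1. bilin_ext (\<lambda>s' t'. bilin_ext (\<lambda>u' v'. bilin_ext (\<lambda>p1 q1. bilin_ext (\<lambda>s2 t2. bilin_ext (\<lambda>p2 q2. F s1 s2 t2 p1 p2 q2 v') (R2 (tens q1 u'))) (R1 (tens t1 s'))) (R2 (tens (bvec c) t'))) (R2 (tens (bvec c') (bvec b'')))) (R1 (tens (bvec b') (bvec a'')))) (R1 (tens (bvec b) (bvec a')))"
    by (rule bilin_ext_cong, rule bilin_ext_cong, rule bilin_ext_cong, rule bilin_ext_swap)
  also have "\<dots> = bilin_ext (\<lambda>s1 t1. bilin_ext (\<lambda>s' t'. bilin_ext (\<lambda>p1 q1. G s1 t1 s' p1 q1) (R2 (tens (bvec c) t'))) (R1 (tens (bvec b') (bvec a'')))) (R1 (tens (bvec b) (bvec a')))"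
    unfolding G_def by (rule bilin_ext_cong, rule bilin_ext_cong, rule bilin_ext_swap)
  also have "\<dots> = bilin_ext (\<lambda>s1 t1. bilin_ext (\<lambda>p q. bilin_ext (\<lambda>x1 y1. G s1 t1 x1 y1 q) (R1 (tens p (bvec a'')))) (R2 (tens (bvec c) (bvec b')))) (R1 (tens (bvec b) (bvec a')))"
  proof (rule bilin_ext_cong)
    fix i j
    have l3: "lin3 (G (bvec i) (bvec j))"
      unfolding lin3_def G_def F_def by (simp add: NS)
    show "bilin_ext (\<lambda>s' t'. bilin_ext (\<lambda>p1 q1. G (bvec i) (bvec j) s' p1 q1) (R2 (tens (bvec c) t'))) (R1 (tens (bvec b') (bvec a''))) =
          bilin_ext (\<lambda>p q. bilin_ext (\<lambda>x1 y1. G (bvec i) (bvec j) x1 y1 q) (R1 (tens p (bvec a'')))) (R2 (tens (bvec c) (bvec b')))"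
      by (rule braid_pt[OF l3])
  qed
  also have "\<dots> = bilin_ext (\<lambda>s1 t1. bilin_ext (\<lambda>p q. bilin_ext (\<lambda>x1 y1. bilin_ext (\<lambda>x2 y2. bilin_ext (\<lambda>z1 w1. bilin_ext (\<lambda>z2 w2. F s1 x2 y2 y1 z2 w2 w1) (R2 (tens q z1))) (R2 (tens (bvec c') (bvec b'')))) (R1 (tens t1 x1))) (R1 (tens p (bvec a'')))) (R2 (tens (bvec c) (bvec b')))) (R1 (tens (bvec b) (bvec a')))"
    unfolding G_def by (rule bilin_ext_cong, rule bilin_ext_cong, rule bilin_ext_cong, rule bilin_ext_swap)
  finally show ?thesis using eqL eqR by simp
qed

lemma mult_basis: "al3 (M (tens (bvec (a,b,c)) (bvec (a',b',c')))) = M (tens (al3 (bvec (a,b,c))) (al3 (bvec (a',b',c'))))"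
  by (simp add: NS iter_twisted_mult_def tri_ext_def flip_R_def R1_T1 R2_T1 multA multB multC)

theorem iter_hom_assoc: "hom_assoc M al3"
proof -
  have lM: "lin M" by (simp add: iter_twisted_mult_def lin_bilin_ext)
  have la: "lin al3" by (simp add: lin_tmap)
  have m: "al3 (M (tens x y)) = M (tens (al3 x) (al3 y))" for x y
  proof (rule multi2[where f="\<lambda>x y. al3 (M (tens x y))" and g="\<lambda>x y. M (tens (al3 x) (al3 y))"])
    fix i j :: "'a \<times> 'b \<times> 'c"
    obtain a b c where i: "i = (a,b,c)" by (cases i) auto
    obtain a' b' c' where j: "j = (a',b',c')" by (cases j) auto
    show "al3 (M (tens (bvec i) (bvec j))) = M (tens (al3 (bvec i)) (al3 (bvec j)))"
      unfolding i j by (rule mult_basis)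
  qed (simp_all add: NS iter_twisted_mult_def tri_ext_def)
  have as: "M (tens (al3 x) (M (tens y z))) = M (tens (M (tens x y)) (al3 z))" for x y z
  proof (rule multi3[where f="\<lambda>x y z. M (tens (al3 x) (M (tens y z)))" and g="\<lambda>x y z. M (tens (M (tens x y)) (al3 z))"])
    fix i j k :: "'a \<times> 'b \<times> 'c"
    obtain a b c where i: "i = (a,b,c)" by (cases i) auto
    obtain a' b' c' where j: "j = (a',b',c')" by (cases j) auto
    obtain a'' b'' c'' where k: "k = (a'',b'',c'')" by (cases k) auto
    show "M (tens (al3 (bvec i)) (M (tens (bvec j) (bvec k)))) = M (tens (M (tens (bvec i) (bvec j))) (al3 (bvec k)))"
      unfolding i j k by (rule assoc_basis)
  qed (simp_all add: NS iter_twisted_mult_def tri_ext_def)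
  show ?thesis unfolding hom_assoc_def using lM la m as by blast
qed

end



locale setting =
  fixes muH :: "(('h \<times> 'h) \<Rightarrow>\<^sub>0 'k::field) \<Rightarrow> ('h \<Rightarrow>\<^sub>0 'k)"
    and DeltaH :: "('h \<Rightarrow>\<^sub>0 'k) \<Rightarrow> (('h \<times> 'h) \<Rightarrow>\<^sub>0 'k)"
    and alH :: "('h \<Rightarrow>\<^sub>0 'k) \<Rightarrow> ('h \<Rightarrow>\<^sub>0 'k)"
    and muA :: "(('a \<times> 'a) \<Rightarrow>\<^sub>0 'k) \<Rightarrow> ('a \<Rightarrow>\<^sub>0 'k)"
    and alA :: "('a \<Rightarrow>\<^sub>0 'k) \<Rightarrow> ('a \<Rightarrow>\<^sub>0 'k)"
    and actA :: "(('h \<times> 'a) \<Rightarrow>\<^sub>0 'k) \<Rightarrow> ('a \<Rightarrow>\<^sub>0 'k)"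
    and muC :: "(('c \<times> 'c) \<Rightarrow>\<^sub>0 'k) \<Rightarrow> ('c \<Rightarrow>\<^sub>0 'k)"
    and alC :: "('c \<Rightarrow>\<^sub>0 'k) \<Rightarrow> ('c \<Rightarrow>\<^sub>0 'k)"
    and actC :: "(('c \<times> 'h) \<Rightarrow>\<^sub>0 'k) \<Rightarrow> ('c \<Rightarrow>\<^sub>0 'k)"
  assumes H: "hom_bialgebra muH DeltaH alH"
    and A: "left_module_hom_algebra muH DeltaH alH muA alA actA"
    and C: "right_module_hom_algebra muH DeltaH alH muC alC actC"
    and bijH: "bij alH" and bijA: "bij alA" and bijC: "bij alC"
begin

abbreviation "iH \<equiv> inv alH"
abbreviation "iA \<equiv> inv alA"
abbreviation "iC \<equiv> inv alC"

lemma lin_muH: "lin muH" and lin_alH: "lin alH" and lin_D: "lin DeltaH"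
  using H by (auto simp: hom_bialgebra_def hom_assoc_def)
lemma lin_muA: "lin muA" and lin_alA: "lin alA" and lin_actA: "lin actA"
  using A by (auto simp: left_module_hom_algebra_def hom_assoc_def)
lemma lin_muC: "lin muC" and lin_alC: "lin alC" and lin_actC: "lin actC"
  using C by (auto simp: right_module_hom_algebra_def hom_assoc_def)
lemma lin_iH: "lin iH" using inv_lin[OF lin_alH bijH] .
lemma lin_iA: "lin iA" using inv_lin[OF lin_alA bijA] .
lemma lin_iC: "lin iC" using inv_lin[OF lin_alC bijC] .

lemma alH_iH[simp]: "alH (iH x) = x" using bijH by (simp add: bij_is_surj surj_f_inv_f)
lemma iH_alH[simp]: "iH (alH x) = x" using bijH by (simp add: bij_is_inj)
lemma alA_iA[simp]: "alA (iA x) = x" using bijA by (simp add: bij_is_surj surj_f_inv_f)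
lemma iA_alA[simp]: "iA (alA x) = x" using bijA by (simp add: bij_is_inj)
lemma alC_iC[simp]: "alC (iC x) = x" using bijC by (simp add: bij_is_surj surj_f_inv_f)
lemma iC_alC[simp]: "iC (alC x) = x" using bijC by (simp add: bij_is_inj)

lemmas lin_maps = lin_muH lin_alH lin_D lin_muA lin_alA lin_actA lin_muC lin_alC lin_actC lin_iH lin_iA lin_iC

lemmas linc = lin_comp_simp[OF lin_muH] lin_comp_simp[OF lin_alH] lin_comp_simp[OF lin_D]
  lin_comp_simp[OF lin_muA] lin_comp_simp[OF lin_alA] lin_comp_simp[OF lin_actA]
  lin_comp_simp[OF lin_muC] lin_comp_simp[OF lin_alC] lin_comp_simp[OF lin_actC]
  lin_comp_simp[OF lin_iH] lin_comp_simp[OF lin_iA] lin_comp_simp[OF lin_iC]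

lemmas pullc = lin_pull[OF lin_muH] lin_pull[OF lin_alH] lin_pull[OF lin_D]
  lin_pull[OF lin_muA] lin_pull[OF lin_alA] lin_pull[OF lin_actA]
  lin_pull[OF lin_muC] lin_pull[OF lin_alC] lin_pull[OF lin_actC]
  lin_pull[OF lin_iH] lin_pull[OF lin_iA] lin_pull[OF lin_iC]

lemmas NS = lin_simps linc pull_simps pullc bilin_ext_tens tmap_def asl_def asr_def


lemma alH_mult: "alH (muH (tens x y)) = muH (tens (alH x) (alH y))"
  and H_assoc: "muH (tens (alH x) (muH (tens y z))) = muH (tens (muH (tens x y)) (alH z))"
  and coassoc: "bilin_ext (\<lambda>h1 h2. tens (DeltaH h1) (alH h2)) (DeltaH h)
          = asl (bilin_ext (\<lambda>h1 h2. tens (alH h1) (DeltaH h2)) (DeltaH h))"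
  and D_mult: "DeltaH (muH (tens h h')) =
          bilin_ext (\<lambda>h1 h2. bilin_ext (\<lambda>h1' h2'. tens (muH (tens h1 h1')) (muH (tens h2 h2'))) (DeltaH h')) (DeltaH h)"
  and D_al: "DeltaH (alH h) = bilin_ext (\<lambda>h1 h2. tens (alH h1) (alH h2)) (DeltaH h)"
  using H unfolding hom_bialgebra_def hom_assoc_def by blast+

lemma alA_mult: "alA (muA (tens x y)) = muA (tens (alA x) (alA y))"
  and A_assoc: "muA (tens (alA x) (muA (tens y z))) = muA (tens (muA (tens x y)) (alA z))"
  and actA_al: "alA (actA (tens h a)) = actA (tens (alH h) (alA a))"
  and actA_act: "actA (tens (alH h) (actA (tens h' a))) = actA (tens (muH (tens h h')) (alA a))"
  and actA_mu: "actA (tens (alH (alH h)) (muA (tens a a')))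
          = bilin_ext (\<lambda>h1 h2. muA (tens (actA (tens h1 a)) (actA (tens h2 a')))) (DeltaH h)"
  using A unfolding left_module_hom_algebra_def hom_assoc_def by blast+

lemma alC_mult: "alC (muC (tens x y)) = muC (tens (alC x) (alC y))"
  and C_assoc: "muC (tens (alC x) (muC (tens y z))) = muC (tens (muC (tens x y)) (alC z))"
  and actC_al: "alC (actC (tens c h)) = actC (tens (alC c) (alH h))"
  and actC_act: "actC (tens (actC (tens c h)) (alH h')) = actC (tens (alC c) (muH (tens h h')))"
  and actC_mu: "actC (tens (muC (tens c c')) (alH (alH h)))
          = bilin_ext (\<lambda>h1 h2. muC (tens (actC (tens c h1)) (actC (tens c' h2)))) (DeltaH h)"
  using C unfolding right_module_hom_algebra_def hom_assoc_def by blast+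

lemma iH_mult: "iH (muH (tens x y)) = muH (tens (iH x) (iH y))"
  by (metis alH_mult alH_iH iH_alH)
lemma iA_mult: "iA (muA (tens x y)) = muA (tens (iA x) (iA y))"
  by (metis alA_mult alA_iA iA_alA)
lemma iC_mult: "iC (muC (tens x y)) = muC (tens (iC x) (iC y))"
  by (metis alC_mult alC_iC iC_alC)

lemma SW_al: assumes "lin2 F"
  shows "bilin_ext F (DeltaH (alH h)) = bilin_ext (\<lambda>x y. F (alH x) (alH y)) (DeltaH h)"
  using assms by (simp add: D_al NS)

lemma SW_i: assumes "lin2 F"
  shows "bilin_ext F (DeltaH (iH h)) = bilin_ext (\<lambda>x y. F (iH x) (iH y)) (DeltaH h)"
proof -
  have a: "lin (\<lambda>x. F x y)" "lin (F x)" for x y using assms by (auto simp: lin2_def)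
  have l: "lin2 (\<lambda>x y. F (iH x) (iH y))"
    unfolding lin2_def using lin_comp[OF a(1) lin_iH] lin_comp[OF a(2) lin_iH] by auto
  have "bilin_ext (\<lambda>x y. F (iH x) (iH y)) (DeltaH h) = bilin_ext (\<lambda>x y. F (iH x) (iH y)) (DeltaH (alH (iH h)))"
    by simp
  also have "\<dots> = bilin_ext F (DeltaH (iH h))"
    using SW_al[OF l, of "iH h"] by simp
  finally show ?thesis by simp
qed

lemma SW_mu: assumes "lin2 F"
  shows "bilin_ext F (DeltaH (muH (tens h h'))) = 
    bilin_ext (\<lambda>h1 h2. bilin_ext (\<lambda>h1' h2'. F (muH (tens h1 h1')) (muH (tens h2 h2'))) (DeltaH h')) (DeltaH h)"
  using assms by (simp add: D_mult NS)

lemma coassoc_gen: assumes "lin3 G"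
  shows "bilin_ext (\<lambda>x y. bilin_ext (\<lambda>u v. G u v (alH y)) (DeltaH x)) (DeltaH h)
       = bilin_ext (\<lambda>x y. bilin_ext (\<lambda>u v. G (alH x) u v) (DeltaH y)) (DeltaH h)"
proof -
  have g1: "lin (\<lambda>x. G x y z)" and g2: "lin (\<lambda>y. G x y z)" and g3: "lin (G x y)" for x y z
    using assms by (auto simp: lin3_def)
  define T where "T = bilin_ext (\<lambda>p z. bilin_ext (\<lambda>x y. G x y z) p)"
  have "T (bilin_ext (\<lambda>h1 h2. tens (DeltaH h1) (alH h2)) (DeltaH h))
     = T (asl (bilin_ext (\<lambda>h1 h2. tens (alH h1) (DeltaH h2)) (DeltaH h)))"
    by (simp only: coassoc)
  then show ?thesis
    unfolding T_def by (simp add: NS g1 g2 g3)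
qed


abbreviation "R1 \<equiv> smash_R1 DeltaH alH alA actA"
abbreviation "R2 \<equiv> smash_R2 DeltaH alH alC actC"

lemma actA_mu': "actA (tens (iH h) (muA (tens a a'))) = 
  bilin_ext (\<lambda>u v. muA (tens (actA (tens (iH (iH (iH u))) a)) (actA (tens (iH (iH (iH v))) a')))) (DeltaH h)"
  using actA_mu[of "iH (iH (iH h))" a a'] by (simp add: SW_i NS)

lemma R1_twist_al: "tmap alA alH (R1 z) = R1 (tmap alH alA z)"
proof -
  have "tmap alA alH \<circ> R1 = R1 \<circ> tmap alH alA"
    apply (rule lin_ext2)
    apply (auto simp: o_def NS smash_R1_def SW_al actA_al simp del: tens_bvec)
    done
  then show ?thesis by (metis comp_apply)
qed

lemma R1_twist_2: "R1 (tmap alH muA (asr z)) = tmap muA alH (asl (tmap id R1 (asr (tmap R1 id z))))"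
proof -
  have "(\<lambda>z. R1 (tmap alH muA (asr z))) = (\<lambda>z. tmap muA alH (asl (tmap id R1 (asr (tmap R1 id z)))))"
  proof (rule lin_ext3l)
    fix i j k
    let ?h = "bvec i :: 'h \<Rightarrow>\<^sub>0 'k" and ?a = "bvec j :: 'a \<Rightarrow>\<^sub>0 'k" and ?a' = "bvec k :: 'a \<Rightarrow>\<^sub>0 'k"
    have c: "bilin_ext (\<lambda>x y. bilin_ext (\<lambda>u v. (\<lambda>u v w. tens (muA (tens (actA (tens (iH (iH (iH u))) (iA ?a))) (actA (tens (iH (iH (iH v))) (iA ?a'))))) (iH w)) u v (alH y)) (DeltaH x)) (DeltaH ?h)
       = bilin_ext (\<lambda>x y. bilin_ext (\<lambda>u v. (\<lambda>u v w. tens (muA (tens (actA (tens (iH (iH (iH u))) (iA ?a))) (actA (tens (iH (iH (iH v))) (iA ?a'))))) (iH w)) (alH x) u v) (DeltaH y)) (DeltaH ?h)"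
      by (rule coassoc_gen) (simp add: lin3_def NS)
    show "R1 (tmap alH muA (asr (tens (tens ?h ?a) ?a'))) = tmap muA alH (asl (tmap id R1 (asr (tmap R1 id (tens (tens ?h ?a) ?a')))))"
      using c by (simp add: NS smash_R1_def SW_al SW_i actA_al iA_mult actA_mu' del: tens_bvec)
  qed (simp_all add: NS smash_R1_def lin_maps)
  then show ?thesis by metis
qed


lemma iA_act: "iA (actA (tens h a)) = actA (tens (iH h) (iA a))"
  by (metis actA_al alA_iA iA_alA alH_iH)
lemma actA_act': "actA (tens x (actA (tens y a))) = actA (tens (muH (tens (iH x) y)) (alA a))"
  using actA_act[of "iH x" y a] by simp
lemma iC_act: "iC (actC (tens c h)) = actC (tens (iC c) (iH h))"
  by (metis actC_al alC_iC iC_alC alH_iH)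
lemma actC_act': "actC (tens (actC (tens c h)) y) = actC (tens (alC c) (muH (tens h (iH y))))"
  using actC_act[of c h "iH y"] by simp
lemma actC_mu': "actC (tens (muC (tens c c')) (iH h)) = 
  bilin_ext (\<lambda>u v. muC (tens (actC (tens c (iH (iH (iH u))))) (actC (tens c' (iH (iH (iH v))))))) (DeltaH h)"
  using actC_mu[of c c' "iH (iH (iH h))"] by (simp add: SW_i NS)

lemmas RS = NS smash_R1_def smash_R2_def SW_al SW_i SW_mu actA_al iA_mult iH_mult iC_mult actA_mu' actC_mu'
  iA_act actA_act' iC_act actC_act' actC_al alH_mult

lemma R1_twist_3: "R1 (tmap muH alA (asl z)) = tmap alA muH (asr (tmap R1 id (asl (tmap id R1 z))))"
proof -
  have "(\<lambda>z. R1 (tmap muH alA (asl z))) = (\<lambda>z. tmap alA muH (asr (tmap R1 id (asl (tmap id R1 z)))))"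
  proof (rule lin_ext3r)
    fix i j k
    show "R1 (tmap muH alA (asl (tens (bvec i) (tens (bvec j) (bvec k))))) = tmap alA muH (asr (tmap R1 id (asl (tmap id R1 (tens (bvec i) (tens (bvec j) (bvec k)))))))"
      apply (simp add: RS)
      apply (rule bilin_ext_swap)
      done
  qed (simp_all add: RS lin_maps)
  then show ?thesis by metis
qed

lemma R2_twist_al: "tmap alH alC (R2 z) = R2 (tmap alC alH z)"
proof -
  have "tmap alH alC \<circ> R2 = R2 \<circ> tmap alC alH"
    apply (rule lin_ext2)
    apply (auto simp: o_def RS)
    done
  then show ?thesis by (metis comp_apply)
qed

lemma R2_twist_2: "R2 (tmap alC muH (asr z)) = tmap muH alC (asl (tmap id R2 (asr (tmap R2 id z))))"
proof -
  have "(\<lambda>z. R2 (tmap alC muH (asr z))) = (\<lambda>z. tmap muH alC (asl (tmap id R2 (asr (tmap R2 id z)))))"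
  proof (rule lin_ext3l)
    fix i j k
    show "R2 (tmap alC muH (asr (tens (tens (bvec i) (bvec j)) (bvec k)))) = tmap muH alC (asl (tmap id R2 (asr (tmap R2 id (tens (tens (bvec i) (bvec j)) (bvec k))))))"
      by (simp add: RS)
  qed (simp_all add: RS lin_maps)
  then show ?thesis by metis
qed

lemma R2_twist_3: "R2 (tmap muC alH (asl z)) = tmap alH muC (asr (tmap R2 id (asl (tmap id R2 z))))"
proof -
  have "(\<lambda>z. R2 (tmap muC alH (asl z))) = (\<lambda>z. tmap alH muC (asr (tmap R2 id (asl (tmap id R2 z)))))"
  proof (rule lin_ext3r)
    fix i j k
    let ?c = "bvec i :: 'c \<Rightarrow>\<^sub>0 'k" and ?c' = "bvec j :: 'c \<Rightarrow>\<^sub>0 'k" and ?h = "bvec k :: 'h \<Rightarrow>\<^sub>0 'k"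
    have co: "bilin_ext (\<lambda>x y. bilin_ext (\<lambda>u v. (\<lambda>u v w. tens (iH u) (muC (tens (actC (tens (iC ?c) (iH (iH (iH v))))) (actC (tens (iC ?c') (iH (iH (iH w)))))))) u v (alH y)) (DeltaH x)) (DeltaH ?h)
       = bilin_ext (\<lambda>x y. bilin_ext (\<lambda>u v. (\<lambda>u v w. tens (iH u) (muC (tens (actC (tens (iC ?c) (iH (iH (iH v))))) (actC (tens (iC ?c') (iH (iH (iH w)))))))) (alH x) u v) (DeltaH y)) (DeltaH ?h)"
      by (rule coassoc_gen) (simp add: lin3_def NS)
    show "R2 (tmap muC alH (asl (tens ?c (tens ?c' ?h)))) = tmap alH muC (asr (tmap R2 id (asl (tmap id R2 (tens ?c (tens ?c' ?h))))))"
      using co by (simp add: RS)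
  qed (simp_all add: RS lin_maps)
  then show ?thesis by metis
qed

lemma braid_concrete: "tmap id R2 (asr (tmap flip_R id (asl (tmap id R1 t))))
        = asr (tmap R1 id (asl (tmap id flip_R (asr (tmap R2 id (asl t))))))"
proof -
  have "(\<lambda>t. tmap id R2 (asr (tmap flip_R id (asl (tmap id R1 t))))) = (\<lambda>t. asr (tmap R1 id (asl (tmap id flip_R (asr (tmap R2 id (asl t)))))))"
  proof (rule lin_ext3r)
    fix i j k
    let ?c = "bvec i :: 'c \<Rightarrow>\<^sub>0 'k" and ?h = "bvec j :: 'h \<Rightarrow>\<^sub>0 'k" and ?a = "bvec k :: 'a \<Rightarrow>\<^sub>0 'k"
    have co: "bilin_ext (\<lambda>x y. bilin_ext (\<lambda>u v. (\<lambda>u v w. tens (actA (tens (iH (iH (iH u))) (iA ?a))) (tens (iH (iH v)) (actC (tens (iC ?c) (iH (iH (iH w))))))) u v (alH y)) (DeltaH x)) (DeltaH ?h)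
       = bilin_ext (\<lambda>x y. bilin_ext (\<lambda>u v. (\<lambda>u v w. tens (actA (tens (iH (iH (iH u))) (iA ?a))) (tens (iH (iH v)) (actC (tens (iC ?c) (iH (iH (iH w))))))) (alH x) u v) (DeltaH y)) (DeltaH ?h)"
      by (rule coassoc_gen) (simp add: lin3_def NS)
    show "tmap id R2 (asr (tmap flip_R id (asl (tmap id R1 (tens ?c (tens ?h ?a)))))) = asr (tmap R1 id (asl (tmap id flip_R (asr (tmap R2 id (asl (tens ?c (tens ?h ?a))))))))"
      using co by (simp add: RS flip_R_def)
  qed (simp_all add: RS lin_maps flip_R_def)
  then show ?thesis by metis
qed

lemma mult_eq: "iter_twisted_mult muA muH muC R1 R2 flip_R = two_sided_smash_mult muH DeltaH alH muA alA actA muC alC actC"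
proof (rule lin_ext)
  fix p :: "('a \<times> 'h \<times> 'c) \<times> ('a \<times> 'h \<times> 'c)"
  obtain a b c a' b' c' where p: "p = ((a,b,c),(a',b',c'))" by (cases p) auto
  show "iter_twisted_mult muA muH muC R1 R2 flip_R (bvec p) = two_sided_smash_mult muH DeltaH alH muA alA actA muC alC actC (bvec p)"
    unfolding p by (simp add: RS flip_R_def iter_twisted_mult_def two_sided_smash_mult_def tri_ext_def)
qed (simp_all add: iter_twisted_mult_def two_sided_smash_mult_def lin_bilin_ext)

lemma flip_twist: "hom_twisting muA alA muC alC flip_R"
proof -
  have l: "lin (flip_R :: (('c \<times> 'a) \<Rightarrow>\<^sub>0 'k) \<Rightarrow> _)" by (simp add: flip_R_def lin_bilin_ext)
  have 1: "tmap alA alC (flip_R z) = flip_R (tmap alC alA z)" for z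
  proof -
    have "tmap alA alC \<circ> flip_R = flip_R \<circ> tmap alC alA"
      by (rule lin_ext2) (auto simp: o_def RS flip_R_def lin_maps)
    then show ?thesis by (metis comp_apply)
  qed
  have 2: "flip_R (tmap alC muA (asr z)) = tmap muA alC (asl (tmap id flip_R (asr (tmap flip_R id z))))" for z
  proof -
    have "(\<lambda>z. flip_R (tmap alC muA (asr z))) = (\<lambda>z. tmap muA alC (asl (tmap id flip_R (asr (tmap flip_R id z)))))"
      by (rule lin_ext3l) (simp_all add: RS flip_R_def lin_maps)
    then show ?thesis by metis
  qed
  have 3: "flip_R (tmap muC alA (asl z)) = tmap alA muC (asr (tmap flip_R id (asl (tmap id flip_R z))))" for z
  proof -
    have "(\<lambda>z. flip_R (tmap muC alA (asl z))) = (\<lambda>z. tmap alA muC (asr (tmap flip_R id (asl (tmap id flip_R z)))))"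
      by (rule lin_ext3r) (simp_all add: RS flip_R_def lin_maps)
    then show ?thesis by metis
  qed
  show ?thesis unfolding hom_twisting_def using l 1 2 3 by blast
qed

end

theorem proposition3p16:
  fixes muH :: "(('h \<times> 'h) \<Rightarrow>\<^sub>0 'k::field) \<Rightarrow> ('h \<Rightarrow>\<^sub>0 'k)"
    and DeltaH :: "('h \<Rightarrow>\<^sub>0 'k) \<Rightarrow> (('h \<times> 'h) \<Rightarrow>\<^sub>0 'k)"
    and alH :: "('h \<Rightarrow>\<^sub>0 'k) \<Rightarrow> ('h \<Rightarrow>\<^sub>0 'k)"
    and muA :: "(('a \<times> 'a) \<Rightarrow>\<^sub>0 'k) \<Rightarrow> ('a \<Rightarrow>\<^sub>0 'k)"
    and alA :: "('a \<Rightarrow>\<^sub>0 'k) \<Rightarrow> ('a \<Rightarrow>\<^sub>0 'k)"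
    and actA :: "(('h \<times> 'a) \<Rightarrow>\<^sub>0 'k) \<Rightarrow> ('a \<Rightarrow>\<^sub>0 'k)"
    and muC :: "(('c \<times> 'c) \<Rightarrow>\<^sub>0 'k) \<Rightarrow> ('c \<Rightarrow>\<^sub>0 'k)"
    and alC :: "('c \<Rightarrow>\<^sub>0 'k) \<Rightarrow> ('c \<Rightarrow>\<^sub>0 'k)"
    and actC :: "(('c \<times> 'h) \<Rightarrow>\<^sub>0 'k) \<Rightarrow> ('c \<Rightarrow>\<^sub>0 'k)"
  assumes H: "hom_bialgebra muH DeltaH alH"
    and A: "left_module_hom_algebra muH DeltaH alH muA alA actA"
    and C: "right_module_hom_algebra muH DeltaH alH muC alC actC"
    and bijH: "bij alH" and bijA: "bij alA" and bijC: "bij alC"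
  defines "R1 \<equiv> smash_R1 DeltaH alH alA actA"
    and "R2 \<equiv> smash_R2 DeltaH alH alC actC"
    and "R3 \<equiv> (flip_R :: (('c \<times> 'a) \<Rightarrow>\<^sub>0 'k) \<Rightarrow> (('a \<times> 'c) \<Rightarrow>\<^sub>0 'k))"
  shows "hom_twisting muA alA muH alH R1 \<and> hom_twisting muH alH muC alC R2 \<and> hom_twisting muA alA muC alC R3
     \<and> (\<forall>t :: (('c \<times> ('h \<times> 'a)) \<Rightarrow>\<^sub>0 'k).
          tmap id R2 (asr (tmap R3 id (asl (tmap id R1 t))))
        = asr (tmap R1 id (asl (tmap id R3 (asr (tmap R2 id (asl t)))))))
     \<and> hom_assoc (iter_twisted_mult muA muH muC R1 R2 R3) (tmap alA (tmap alH alC))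
     \<and> iter_twisted_mult muA muH muC R1 R2 R3 = two_sided_smash_mult muH DeltaH alH muA alA actA muC alC actC"
proof -
  interpret setting muH DeltaH alH muA alA actA muC alC actC
    using H A C bijH bijA bijC by unfold_locales
  have tw1: "hom_twisting muA alA muH alH R1"
    unfolding hom_twisting_def R1_def
    using R1_twist_al R1_twist_2 R1_twist_3 by (simp add: smash_R1_def lin_bilin_ext)
  have tw2: "hom_twisting muH alH muC alC R2"
    unfolding hom_twisting_def R2_def
    using R2_twist_al R2_twist_2 R2_twist_3 by (simp add: smash_R2_def lin_bilin_ext)
  have tw3: "hom_twisting muA alA muC alC R3"
    unfolding R3_def by (rule flip_twist)
  have br: "\<And>t :: (('c \<times> ('h \<times> 'a)) \<Rightarrow>\<^sub>0 'k).
          tmap id R2 (asr (tmap R3 id (asl (tmap id R1 t))))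
        = asr (tmap R1 id (asl (tmap id R3 (asr (tmap R2 id (asl t))))))"
    unfolding R1_def R2_def R3_def by (rule braid_concrete)
  have hA: "hom_assoc muA alA" using A by (simp add: left_module_hom_algebra_def)
  have hH: "hom_assoc muH alH" using H by (simp add: hom_bialgebra_def)
  have hC: "hom_assoc muC alC" using C by (simp add: right_module_hom_algebra_def)
  interpret T: twist3 muA alA muH alH muC alC R1 R2
    using hA hH hC tw1 tw2 br unfolding R3_def by unfold_locales auto
  have ha: "hom_assoc (iter_twisted_mult muA muH muC R1 R2 R3) (tmap alA (tmap alH alC))"
    unfolding R3_def by (rule T.iter_hom_assoc)
  have me: "iter_twisted_mult muA muH muC R1 R2 R3 = two_sided_smash_mult muH DeltaH alH muA alA actA muC alC actC"
    unfolding R1_def R2_def R3_def by (rule mult_eq)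
  show ?thesis using tw1 tw2 tw3 br ha me by blast
qed

end
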